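(* Assume $\mathbb Q\subset k$, let $R=\operatorname{End}_k(A)$ and $D\in\mathcal U^p(R;\Delta)$. The following are equivalent: (a) $D\in\operatorname{HS}^p_k(A;\Delta)$; (b) $\varepsilon^{\mathfrak d}(D)\in\operatorname{Der}_k(A)[[{\bf s}]]_\Delta$ for every $k$-derivation $\mathfrak d:k[[{\bf s}]]_\Delta\to k[[{\bf s}]]_\Delta$; (c) $\varepsilon(D)\in\operatorname{Der}_k(A)[[{\bf s}]]_\Delta$.
   Context: $k$ is a commutative ring, $A$ a commutative $k$-algebra, $R=\operatorname{End}_k(A)$; ${\bf s}=\{s_1,\dots,s_p\}$ commuting variables, ${\bf s}^\alpha=s_1^{\alpha_1}\cdots s_p^{\alpha_p}$, $|\alpha|=\sum\alpha_i$. A co-ideal is a non-empty $\Delta\subset\mathbb N^p$ with $\alpha\in\Delta,\alpha'\le\alpha$ (componentwise) $\Rightarrow\alpha'\in\Delta$. For a ring/group $M$, $M[[{\bf s}]]_\Delta$ is the set of formal sums $\sum_{\alpha\in\Delta}m_\alpha{\bf s}^\alpha$ (truncated product for rings, variables central). $\mathcal U^p(R;\Delta)$ is the group of $r\in R[[{\bf s}]]_\Delta$ with $r_0=1$, $r^*$ the inverse. For a $k$-derivation $\mathfrak d$ of $k[[{\bf s}]]_\Delta$, $\mathfrak d_R(\sum r_\alpha{\bf s}^\alpha)=\sum r_\alpha\mathfrak d({\bf s}^\alpha)$ and $\varepsilon^{\mathfrak d}(r)=r^*\mathfrak d_R(r)$; $\varepsilon(r)=\varepsilon^{\boldsymbol\chi}(r)=r^*\sum_\alpha|\alpha|r_\alpha{\bf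 s}^\alpha$, where $\boldsymbol\chi=\sum_is_i\partial/\partial s_i$. $\operatorname{HS}^p_k(A;\Delta)$ is the set of $D=\sum_{\alpha\in\Delta}D_\alpha{\bf s}^\alpha\in R[[{\bf s}]]_\Delta$ with $D_0=\mathrm{Id}_A$ and $D_\alpha(xy)=\sum_{\beta+\gamma=\alpha}D_\beta(x)D_\gamma(y)$ for all $x,y\in A$, $\alpha\in\Delta$. *)

theory Defs
  imports Main
begin

text \<open>Multi-indices in \<open>\<nat>\<^sup>p\<close> are functions \<open>nat \<Rightarrow> nat\<close> vanishing at \<open>i \<ge> p\<close>;
  the order is the pointwise one (\<open>le_fun\<close>) and \<open>\<alpha> - \<beta>\<close> is pointwise.
  A truncated series in \<open>M[[s]]_\<Delta>\<close> is a function from multi-indices to \<open>M\<close>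
  that vanishes outside \<open>\<Delta>\<close>.
  The commutative \<open>k\<close>-algebra \<open>A\<close> is given by its structure ring homomorphism \<open>\<iota> : k \<rightarrow> A\<close>.\<close>

definition Q_subring :: "'k::comm_ring_1 itself \<Rightarrow> bool" where
  "Q_subring _ \<longleftrightarrow> (\<forall>n::nat. n > 0 \<longrightarrow> (\<exists>u::'k. of_nat n * u = 1))"

definition ring_hom_k :: "('k::comm_ring_1 \<Rightarrow> 'a::comm_ring_1) \<Rightarrow> bool" where
  "ring_hom_k \<iota> \<longleftrightarrow> \<iota> 1 = 1 \<and> (\<forall>a b. \<iota> (a + b) = \<iota> a + \<iota> b) \<and> (\<forall>a b. \<iota> (a * b) = \<iota> a * \<iota> b)"

definition co_ideal :: "nat \<Rightarrow> (nat \<Rightarrow> nat) set \<Rightarrow> bool" where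
  "co_ideal p \<Delta> \<longleftrightarrow> \<Delta> \<noteq> {} \<and> (\<forall>\<alpha>\<in>\<Delta>. \<forall>i\<ge>p. \<alpha> i = 0)
     \<and> (\<forall>\<alpha>\<in>\<Delta>. \<forall>\<beta>. \<beta> \<le> \<alpha> \<longrightarrow> \<beta> \<in> \<Delta>)"

definition mdeg :: "nat \<Rightarrow> (nat \<Rightarrow> nat) \<Rightarrow> nat" where
  "mdeg p \<alpha> = (\<Sum>i<p. \<alpha> i)"

definition End_k :: "('k::comm_ring_1 \<Rightarrow> 'a::comm_ring_1) \<Rightarrow> ('a \<Rightarrow> 'a) set" where
  "End_k \<iota> = {f. (\<forall>x y. f (x + y) = f x + f y) \<and> (\<forall>c x. f (\<iota> c * x) = \<iota> c * f x)}"

definition Der_k :: "('k::comm_ring_1 \<Rightarrow> 'a::comm_ring_1) \<Rightarrow> ('a \<Rightarrow> 'a) set" where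
  "Der_k \<iota> = {f \<in> End_k \<iota>. \<forall>x y. f (x * y) = x * f y + f x * y}"

definition ser_on :: "(nat \<Rightarrow> nat) set \<Rightarrow> 'm \<Rightarrow> 'm set \<Rightarrow> ((nat \<Rightarrow> nat) \<Rightarrow> 'm) set" where
  "ser_on \<Delta> z M = {r. (\<forall>\<alpha>\<in>\<Delta>. r \<alpha> \<in> M) \<and> (\<forall>\<alpha>. \<alpha> \<notin> \<Delta> \<longrightarrow> r \<alpha> = z)}"

definition ser_mult :: "(nat \<Rightarrow> nat) set \<Rightarrow> ((nat \<Rightarrow> nat) \<Rightarrow> 'a::comm_ring_1 \<Rightarrow> 'a)
    \<Rightarrow> ((nat \<Rightarrow> nat) \<Rightarrow> 'a \<Rightarrow> 'a) \<Rightarrow> ((nat \<Rightarrow> nat) \<Rightarrow> 'a \<Rightarrow> 'a)" where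
  "ser_mult \<Delta> r r' = (\<lambda>\<alpha>. if \<alpha> \<in> \<Delta> then (\<lambda>x. \<Sum>\<beta>\<in>{\<beta>. \<beta> \<le> \<alpha>}. r \<beta> (r' (\<alpha> - \<beta>) x))
                              else (\<lambda>_. 0))"

definition ser_one :: "(nat \<Rightarrow> nat) set \<Rightarrow> ((nat \<Rightarrow> nat) \<Rightarrow> 'a::comm_ring_1 \<Rightarrow> 'a)" where
  "ser_one \<Delta> = (\<lambda>\<alpha>. if \<alpha> = (\<lambda>_. 0) then id else (\<lambda>_. 0))"

definition U_group :: "('k::comm_ring_1 \<Rightarrow> 'a::comm_ring_1) \<Rightarrow> (nat \<Rightarrow> nat) set
    \<Rightarrow> ((nat \<Rightarrow> nat) \<Rightarrow> 'a \<Rightarrow> 'a) set" where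
  "U_group \<iota> \<Delta> = {r \<in> ser_on \<Delta> (\<lambda>_. 0) (End_k \<iota>). r (\<lambda>_. 0) = id}"

definition ser_inv :: "('k::comm_ring_1 \<Rightarrow> 'a::comm_ring_1) \<Rightarrow> (nat \<Rightarrow> nat) set
    \<Rightarrow> ((nat \<Rightarrow> nat) \<Rightarrow> 'a \<Rightarrow> 'a) \<Rightarrow> ((nat \<Rightarrow> nat) \<Rightarrow> 'a \<Rightarrow> 'a)" where
  "ser_inv \<iota> \<Delta> r = (THE r'. r' \<in> ser_on \<Delta> (\<lambda>_. 0) (End_k \<iota>) \<and> ser_mult \<Delta> r' r = ser_one \<Delta>)"

definition kser_mult :: "(nat \<Rightarrow> nat) set \<Rightarrow> ((nat \<Rightarrow> nat) \<Rightarrow> 'k::comm_ring_1)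
    \<Rightarrow> ((nat \<Rightarrow> nat) \<Rightarrow> 'k) \<Rightarrow> ((nat \<Rightarrow> nat) \<Rightarrow> 'k)" where
  "kser_mult \<Delta> f g = (\<lambda>\<alpha>. if \<alpha> \<in> \<Delta> then (\<Sum>\<beta>\<in>{\<beta>. \<beta> \<le> \<alpha>}. f \<beta> * g (\<alpha> - \<beta>)) else 0)"

definition kmono :: "(nat \<Rightarrow> nat) \<Rightarrow> ((nat \<Rightarrow> nat) \<Rightarrow> 'k::comm_ring_1)" where
  "kmono \<alpha> = (\<lambda>\<gamma>. if \<gamma> = \<alpha> then 1 else 0)"

definition is_kser_derivation :: "(nat \<Rightarrow> nat) set
    \<Rightarrow> (((nat \<Rightarrow> nat) \<Rightarrow> 'k::comm_ring_1) \<Rightarrow> ((nat \<Rightarrow> nat) \<Rightarrow> 'k)) \<Rightarrow> bool" where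
  "is_kser_derivation \<Delta> d \<longleftrightarrow>
     (\<forall>f \<in> ser_on \<Delta> 0 UNIV. d f \<in> ser_on \<Delta> 0 UNIV) \<and>
     (\<forall>f \<in> ser_on \<Delta> 0 UNIV. \<forall>g \<in> ser_on \<Delta> 0 UNIV. d (\<lambda>\<alpha>. f \<alpha> + g \<alpha>) = (\<lambda>\<alpha>. d f \<alpha> + d g \<alpha>)) \<and>
     (\<forall>f \<in> ser_on \<Delta> 0 UNIV. \<forall>c. d (\<lambda>\<alpha>. c * f \<alpha>) = (\<lambda>\<alpha>. c * d f \<alpha>)) \<and>
     (\<forall>f \<in> ser_on \<Delta> 0 UNIV. \<forall>g \<in> ser_on \<Delta> 0 UNIV.
        d (kser_mult \<Delta> f g) = (\<lambda>\<alpha>. kser_mult \<Delta> f (d g) \<alpha> + kser_mult \<Delta> (d f) g \<alpha>))"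

text \<open>\<open>\<dd>_R(\<Sum> r_\<alpha> s^\<alpha>) = \<Sum> r_\<alpha> \<dd>(s^\<alpha>)\<close>; for each \<open>\<gamma>\<close> only the (finitely many)
  \<open>\<alpha>\<close> with nonzero \<open>\<gamma>\<close>-coefficient of \<open>\<dd>(s^\<alpha>)\<close> contribute.\<close>
definition dR :: "('k::comm_ring_1 \<Rightarrow> 'a::comm_ring_1) \<Rightarrow> (nat \<Rightarrow> nat) set
    \<Rightarrow> (((nat \<Rightarrow> nat) \<Rightarrow> 'k) \<Rightarrow> ((nat \<Rightarrow> nat) \<Rightarrow> 'k))
    \<Rightarrow> ((nat \<Rightarrow> nat) \<Rightarrow> 'a \<Rightarrow> 'a) \<Rightarrow> ((nat \<Rightarrow> nat) \<Rightarrow> 'a \<Rightarrow> 'a)" where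
  "dR \<iota> \<Delta> d r = (\<lambda>\<gamma> x. \<Sum>\<alpha>\<in>{\<alpha>\<in>\<Delta>. d (kmono \<alpha>) \<gamma> \<noteq> 0}. \<iota> (d (kmono \<alpha>) \<gamma>) * r \<alpha> x)"

definition eps_d :: "('k::comm_ring_1 \<Rightarrow> 'a::comm_ring_1) \<Rightarrow> (nat \<Rightarrow> nat) set
    \<Rightarrow> (((nat \<Rightarrow> nat) \<Rightarrow> 'k) \<Rightarrow> ((nat \<Rightarrow> nat) \<Rightarrow> 'k))
    \<Rightarrow> ((nat \<Rightarrow> nat) \<Rightarrow> 'a \<Rightarrow> 'a) \<Rightarrow> ((nat \<Rightarrow> nat) \<Rightarrow> 'a \<Rightarrow> 'a)" where
  "eps_d \<iota> \<Delta> d r = ser_mult \<Delta> (ser_inv \<iota> \<Delta> r) (dR \<iota> \<Delta> d r)"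

definition eps :: "('k::comm_ring_1 \<Rightarrow> 'a::comm_ring_1) \<Rightarrow> nat \<Rightarrow> (nat \<Rightarrow> nat) set
    \<Rightarrow> ((nat \<Rightarrow> nat) \<Rightarrow> 'a \<Rightarrow> 'a) \<Rightarrow> ((nat \<Rightarrow> nat) \<Rightarrow> 'a \<Rightarrow> 'a)" where
  "eps \<iota> p \<Delta> r = ser_mult \<Delta> (ser_inv \<iota> \<Delta> r) (\<lambda>\<alpha> x. of_nat (mdeg p \<alpha>) * r \<alpha> x)"

definition HS :: "('k::comm_ring_1 \<Rightarrow> 'a::comm_ring_1) \<Rightarrow> (nat \<Rightarrow> nat) set
    \<Rightarrow> ((nat \<Rightarrow> nat) \<Rightarrow> 'a \<Rightarrow> 'a) set" where
  "HS \<iota> \<Delta> = {D \<in> ser_on \<Delta> (\<lambda>_. 0) (End_k \<iota>). D (\<lambda>_. 0) = id \<and>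
     (\<forall>\<alpha>\<in>\<Delta>. \<forall>x y. D \<alpha> (x * y) = (\<Sum>\<beta>\<in>{\<beta>. \<beta> \<le> \<alpha>}. D \<beta> x * D (\<alpha> - \<beta>) y))}"

end

theory Submission imports Defs begin

definition madd :: "(nat \<Rightarrow> nat) \<Rightarrow> (nat \<Rightarrow> nat) \<Rightarrow> (nat \<Rightarrow> nat)" where
  "madd a b = (\<lambda>i. a i + b i)"

abbreviation z0 :: "nat \<Rightarrow> nat" where "z0 \<equiv> (\<lambda>_. 0)"

lemma finite_bnd: "finite {b::nat\<Rightarrow>nat. (\<forall>i\<ge>p. b i = 0) \<and> (\<forall>i. b i \<le> n)}"
proof (induction p)
  case 0
  have "{b::nat\<Rightarrow>nat. (\<forall>i\<ge>0. b i = 0) \<and> (\<forall>i. b i \<le> n)} \<subseteq> {z0}" by auto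
  then show ?case using finite_subset by blast
next
  case (Suc p)
  let ?S = "{b::nat\<Rightarrow>nat. (\<forall>i\<ge>p. b i = 0) \<and> (\<forall>i. b i \<le> n)}"
  have "{b::nat\<Rightarrow>nat. (\<forall>i\<ge>Suc p. b i = 0) \<and> (\<forall>i. b i \<le> n)} \<subseteq> (\<lambda>(f,k). f(p:=k)) ` (?S \<times> {..n})"
  proof
    fix b assume b: "b \<in> {b::nat\<Rightarrow>nat. (\<forall>i\<ge>Suc p. b i = 0) \<and> (\<forall>i. b i \<le> n)}"
    have "b = (\<lambda>(f,k). f(p:=k)) (b(p:=0), b p)" by auto
    moreover have "(b(p:=0), b p) \<in> ?S \<times> {..n}" using b by auto
    ultimately show "b \<in> (\<lambda>(f,k). f(p:=k)) ` (?S \<times> {..n})" by blast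
  qed
  moreover have "finite ((\<lambda>(f,k). f(p:=k)) ` (?S \<times> {..n}))" using Suc by simp
  ultimately show ?case by (rule finite_subset)
qed

lemma mdeg_le_split: "(b::nat\<Rightarrow>nat) \<le> a \<Longrightarrow> mdeg p a = mdeg p b + mdeg p (a - b)"
  unfolding mdeg_def by (simp add: le_fun_def sum.distrib[symmetric])

lemma mdeg_madd: "mdeg p (madd a b) = mdeg p a + mdeg p b"
  unfolding mdeg_def madd_def by (simp add: sum.distrib)

lemma madd_diff: "b \<le> a \<Longrightarrow> madd b (a - b) = a"
  by (auto simp: madd_def le_fun_def fun_eq_iff)
lemma madd_diff2: "madd b a - b = a"
  by (auto simp: madd_def fun_eq_iff)
lemma le_madd: "b \<le> madd b a"
  by (auto simp: madd_def le_fun_def)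

lemma diff_z0[simp]: "(a::nat\<Rightarrow>nat) - z0 = a"
  by (simp add: fun_eq_iff)
lemma self_diff[simp]: "(a::nat\<Rightarrow>nat) - a = z0"
  by (simp add: fun_eq_iff)

lemma diff_diff_fun: "(b::nat\<Rightarrow>nat) \<le> a \<Longrightarrow> a - (a - b) = b"
  by (auto simp: le_fun_def fun_eq_iff)
lemma diff_le_fun: "(a::nat\<Rightarrow>nat) - b \<le> a"
  by (auto simp: le_fun_def)
lemma h1: "(b::nat\<Rightarrow>nat) \<le> c \<Longrightarrow> c \<le> a \<Longrightarrow> c - b \<le> a - b"
  by (auto simp: le_fun_def intro: diff_le_mono)
lemma h2: "(n::nat\<Rightarrow>nat) \<le> a - m \<Longrightarrow> m \<le> a \<Longrightarrow> madd m n \<le> a"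
  by (auto simp: le_fun_def madd_def) (metis add.commute le_diff_conv2)
lemma h3: "(b::nat\<Rightarrow>nat) \<le> c \<Longrightarrow> c \<le> a \<Longrightarrow> a - b - (c - b) = a - c"
  by (auto simp: le_fun_def fun_eq_iff)
lemma h4: "(n::nat\<Rightarrow>nat) \<le> a - m \<Longrightarrow> a - m - n = a - madd m n"
  by (auto simp: le_fun_def fun_eq_iff madd_def)

locale hsctx =
  fixes \<iota> :: "'k::comm_ring_1 \<Rightarrow> 'a::comm_ring_1" and p :: nat and \<Delta> :: "(nat \<Rightarrow> nat) set"
  assumes hom: "ring_hom_k \<iota>" and coi: "co_ideal p \<Delta>"
begin

lemma iota_add: "\<iota> (a + b) = \<iota> a + \<iota> b" and iota_mult: "\<iota> (a * b) = \<iota> a * \<iota> b"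
  and iota_1: "\<iota> 1 = 1"
  using hom by (auto simp: ring_hom_k_def)

lemma iota_0: "\<iota> 0 = 0"
  using iota_add[of 0 0] by simp

lemma iota_of_nat: "\<iota> (of_nat n) = of_nat n"
  by (induction n) (auto simp: iota_0 iota_add iota_1)

lemma zero_in: "z0 \<in> \<Delta>"
proof -
  obtain a where "a \<in> \<Delta>" using coi by (auto simp: co_ideal_def)
  then show ?thesis using coi by (auto simp: co_ideal_def le_fun_def)
qed

lemma down: "a \<in> \<Delta> \<Longrightarrow> b \<le> a \<Longrightarrow> b \<in> \<Delta>"
  using coi by (auto simp: co_ideal_def)

lemma supp: "a \<in> \<Delta> \<Longrightarrow> i \<ge> p \<Longrightarrow> a i = 0"
  using coi by (auto simp: co_ideal_def)

lemma comp_le_mdeg: "a \<in> \<Delta> \<Longrightarrow> a i \<le> mdeg p a"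
proof (cases "i < p")
  case True
  assume "a \<in> \<Delta>"
  have "a i = (\<Sum>j\<in>{i}. a j)" by simp
  also have "\<dots> \<le> (\<Sum>j<p. a j)" by (rule sum_mono2) (use True in auto)
  finally show ?thesis by (simp add: mdeg_def)
qed (auto simp: supp)

lemma finite_deg: "finite {a\<in>\<Delta>. mdeg p a \<le> n}"
  by (rule finite_subset[OF _ finite_bnd[of p n]]) (auto simp: supp intro: order.trans[OF comp_le_mdeg])

lemma finite_L: "a \<in> \<Delta> \<Longrightarrow> finite {b. b \<le> a}"
  by (rule finite_subset[OF _ finite_deg[of "mdeg p a"]])
     (auto intro: down simp: mdeg_le_split)

lemma diff_in: "a \<in> \<Delta> \<Longrightarrow> a - b \<in> \<Delta>"
  by (erule down) (auto simp: le_fun_def)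

lemma mdeg_pos: "a \<in> \<Delta> \<Longrightarrow> a \<noteq> z0 \<Longrightarrow> mdeg p a > 0"
proof -
  assume a: "a \<in> \<Delta>" "a \<noteq> z0"
  then obtain i where i: "a i \<noteq> 0" by auto
  then have "i < p" using supp[OF a(1)] by (meson not_le)
  have "0 < a i" using i by simp
  also have "a i \<le> mdeg p a" by (rule comp_le_mdeg[OF a(1)])
  finally show ?thesis .
qed

lemma mdeg_less: "a \<in> \<Delta> \<Longrightarrow> b \<le> a \<Longrightarrow> b \<noteq> a \<Longrightarrow> mdeg p b < mdeg p a"
proof -
  assume a: "a \<in> \<Delta>" "b \<le> a" "b \<noteq> a"
  have "a - b \<noteq> z0" using a(2,3) by (auto simp: le_fun_def fun_eq_iff intro: antisym)
  then have "mdeg p (a - b) > 0" using mdeg_pos diff_in a(1) by blast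
  then show ?thesis using mdeg_le_split[OF a(2)] by simp
qed

lemma mdeg_less2: "a \<in> \<Delta> \<Longrightarrow> b \<le> a \<Longrightarrow> b \<noteq> z0 \<Longrightarrow> mdeg p (a - b) < mdeg p a"
  using mdeg_pos[of b] down mdeg_le_split by fastforce

lemma L_zero: "{b. b \<le> z0} = {z0}"
  by (auto simp: le_fun_def fun_eq_iff)


lemma refl_sum: "a \<in> \<Delta> \<Longrightarrow> (\<Sum>b\<in>{b. b \<le> a}. f b (a - b)) = (\<Sum>b\<in>{b. b \<le> a}. f (a - b) b)"
  by (rule sum.reindex_bij_witness[where i="\<lambda>b. a - b" and j="\<lambda>b. a - b"])
     (auto simp: diff_diff_fun diff_le_fun)

lemma triple:
  assumes a: "a \<in> \<Delta>"
  shows "(\<Sum>b\<in>{b. b \<le> a}. \<Sum>m\<in>{m. m \<le> b}. g m (b - m) (a - b))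
       = (\<Sum>m\<in>{m. m \<le> a}. \<Sum>n\<in>{n. n \<le> a - m}. g m n (a - m - n))"
proof -
  have fa: "finite {b. b \<le> a}" using finite_L a by blast
  have fb: "\<forall>b\<in>{b. b \<le> a}. finite {m. m \<le> b}" using finite_L down a by blast
  have fc: "\<forall>m\<in>{m. m \<le> a}. finite {n. n \<le> a - m}" using finite_L diff_in a by blast
  have "(\<Sum>b\<in>{b. b \<le> a}. \<Sum>m\<in>{m. m \<le> b}. g m (b - m) (a - b))
     = (\<Sum>(b,m)\<in>Sigma {b. b \<le> a} (\<lambda>b. {m. m \<le> b}). g m (b - m) (a - b))"
    by (rule sum.Sigma[OF fa fb])
  also have "\<dots> = (\<Sum>(m,n)\<in>Sigma {m. m \<le> a} (\<lambda>m. {n. n \<le> a - m}). g m n (a - m - n))"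
    by (rule sum.reindex_bij_witness[where i="\<lambda>(m,n). (madd m n, m)" and j="\<lambda>(b,m). (m, b - m)"])
       (auto simp: h1 h2 h3 h4 madd_diff madd_diff2 le_madd intro: order.trans)
  also have "\<dots> = (\<Sum>m\<in>{m. m \<le> a}. \<Sum>n\<in>{n. n \<le> a - m}. g m n (a - m - n))"
    by (rule sum.Sigma[OF fa fc, symmetric])
  finally show ?thesis .
qed

lemma pairs:
  assumes fT: "finite T" and dT: "\<forall>a\<in>T. \<forall>b. b \<le> a \<longrightarrow> b \<in> T"
  shows "(\<Sum>a\<in>T. \<Sum>b\<in>{b. b \<le> a}. g a b) = (\<Sum>(b,m)\<in>T\<times>T. if madd b m \<in> T then g (madd b m) b else 0)"
proof -
  have fb: "\<forall>a\<in>T. finite {b. b \<le> a}" using dT fT by (metis finite_subset mem_Collect_eq subsetI)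
  have "(\<Sum>a\<in>T. \<Sum>b\<in>{b. b \<le> a}. g a b) = (\<Sum>(a,b)\<in>Sigma T (\<lambda>a. {b. b \<le> a}). g a b)"
    by (rule sum.Sigma[OF fT fb])
  also have "\<dots> = (\<Sum>q\<in>{q\<in>T\<times>T. madd (fst q) (snd q) \<in> T}. g (madd (fst q) (snd q)) (fst q))"
  proof (rule sum.reindex_bij_witness[where i="\<lambda>(b,m). (madd b m, b)" and j="\<lambda>(a,b). (b, a - b)"])
    fix q assume "q \<in> Sigma T (\<lambda>a. {b. b \<le> a})"
    then obtain a b where q: "q = (a,b)" "a \<in> T" "b \<le> a" by auto
    have "a - b \<le> a" by (auto simp: le_fun_def)
    then show "(case (case q of (a, b) \<Rightarrow> (b, a - b)) of (b, m) \<Rightarrow> (madd b m, b)) = q"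
      "(case q of (a, b) \<Rightarrow> (b, a - b)) \<in> {q\<in>T\<times>T. madd (fst q) (snd q) \<in> T}"
      "g (madd (fst (case q of (a, b) \<Rightarrow> (b, a - b))) (snd (case q of (a, b) \<Rightarrow> (b, a - b)))) (fst (case q of (a, b) \<Rightarrow> (b, a - b))) = (case q of (a, b) \<Rightarrow> g a b)"
      using q dT by (auto simp: madd_diff)
  next
    fix q assume "q \<in> {q\<in>T\<times>T. madd (fst q) (snd q) \<in> T}"
    then obtain b m where q: "q = (b,m)" "madd b m \<in> T" by (cases q) auto
    then show "(case case q of (b, m) \<Rightarrow> (madd b m, b) of (a, b) \<Rightarrow> (b, a - b)) = q"
      "(case q of (b, m) \<Rightarrow> (madd b m, b)) \<in> Sigma T (\<lambda>a. {b. b \<le> a})"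
      by (auto simp: madd_diff2 le_madd)
  qed
  also have "\<dots> = (\<Sum>(b,m)\<in>T\<times>T. if madd b m \<in> T then g (madd b m) b else 0)"
    by (subst sum.inter_filter) (auto simp: fT intro!: sum.cong)
  finally show ?thesis .
qed


abbreviation SE where "SE \<equiv> ser_on \<Delta> (\<lambda>_. 0) (End_k \<iota>)"

lemma End_add: "f \<in> End_k \<iota> \<Longrightarrow> f (x + y) = f x + f y"
  by (simp add: End_k_def)
lemma End_smul: "f \<in> End_k \<iota> \<Longrightarrow> f (\<iota> c * x) = \<iota> c * f x"
  by (simp add: End_k_def)
lemma End_0: "f \<in> End_k \<iota> \<Longrightarrow> f 0 = 0"
  using End_add[of f 0 0] by simp
lemma End_uminus: "f \<in> End_k \<iota> \<Longrightarrow> f (- x) = - f x"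
  using End_add[of f x "-x"] End_0[of f] minus_unique[of "f x" "f (-x)"] by simp
lemma End_diff: "f \<in> End_k \<iota> \<Longrightarrow> f (x - y) = f x - f y"
  using End_add[of f x "-y"] End_uminus[of f y] by simp
lemma End_sum: "f \<in> End_k \<iota> \<Longrightarrow> f (sum g S) = (\<Sum>x\<in>S. f (g x))"
  using sum_comp_morphism[of f g S] End_0 End_add by (simp add: o_def)

lemma SE_in: "r \<in> SE \<Longrightarrow> a \<in> \<Delta> \<Longrightarrow> r a \<in> End_k \<iota>"
  by (simp add: ser_on_def)
lemma SE_out: "r \<in> SE \<Longrightarrow> a \<notin> \<Delta> \<Longrightarrow> r a = (\<lambda>_. 0)"
  by (simp add: ser_on_def)

lemma End_sumI: "(\<And>i. i \<in> S \<Longrightarrow> f i \<in> End_k \<iota>) \<Longrightarrow> (\<lambda>x. \<Sum>i\<in>S. f i x) \<in> End_k \<iota>"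
  by (auto simp: End_k_def sum.distrib sum_distrib_left)

lemma End_comp: "f \<in> End_k \<iota> \<Longrightarrow> g \<in> End_k \<iota> \<Longrightarrow> (\<lambda>x. f (g x)) \<in> End_k \<iota>"
  by (auto simp: End_k_def)

lemma sm_in: "a \<in> \<Delta> \<Longrightarrow> ser_mult \<Delta> r r' a x = (\<Sum>b\<in>{b. b \<le> a}. r b (r' (a - b) x))"
  by (simp add: ser_mult_def)
lemma sm_out: "a \<notin> \<Delta> \<Longrightarrow> ser_mult \<Delta> r r' a = (\<lambda>_. 0)"
  by (simp add: ser_mult_def)

lemma sm_SE:
  assumes r: "r \<in> SE" "r' \<in> SE"
  shows "ser_mult \<Delta> r r' \<in> SE"
proof -
  have "ser_mult \<Delta> r r' a \<in> End_k \<iota>" if a: "a \<in> \<Delta>" for a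
  proof -
    have e: "ser_mult \<Delta> r r' a = (\<lambda>x. \<Sum>b\<in>{b. b \<le> a}. r b (r' (a - b) x))"
      using a by (simp add: ser_mult_def)
    show ?thesis
      unfolding e
    proof (rule End_sumI)
      fix b assume "b \<in> {b. b \<le> a}"
      then have "b \<in> \<Delta>" "a - b \<in> \<Delta>" using down[OF a] diff_in[OF a] by auto
      then show "(\<lambda>x. r b (r' (a - b) x)) \<in> End_k \<iota>"
        by (rule End_comp[OF SE_in[OF r(1)] SE_in[OF r(2)]])
    qed
  qed
  moreover have "ser_mult \<Delta> r r' a = (\<lambda>_. 0)" if "a \<notin> \<Delta>" for a
    using that by (rule sm_out)
  ultimately show ?thesis unfolding ser_on_def by blast
qed

lemma assoc:
  assumes r: "r \<in> SE"
  shows "ser_mult \<Delta> (ser_mult \<Delta> r r') r'' = ser_mult \<Delta> r (ser_mult \<Delta> r' r'')"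
proof (intro ext)
  fix a x
  show "ser_mult \<Delta> (ser_mult \<Delta> r r') r'' a x = ser_mult \<Delta> r (ser_mult \<Delta> r' r'') a x"
  proof (cases "a \<in> \<Delta>")
    case True
    have "ser_mult \<Delta> (ser_mult \<Delta> r r') r'' a x = (\<Sum>b\<in>{b. b \<le> a}. ser_mult \<Delta> r r' b (r'' (a - b) x))"
      by (rule sm_in[OF True])
    also have "\<dots> = (\<Sum>b\<in>{b. b \<le> a}. \<Sum>m\<in>{m. m \<le> b}. r m (r' (b - m) (r'' (a - b) x)))"
      by (rule sum.cong[OF refl]) (simp add: sm_in down[OF True])
    also have "\<dots> = (\<Sum>m\<in>{m. m \<le> a}. \<Sum>n\<in>{n. n \<le> a - m}. r m (r' n (r'' (a - m - n) x)))"
      by (rule triple[OF True])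
    also have "\<dots> = (\<Sum>m\<in>{m. m \<le> a}. r m (ser_mult \<Delta> r' r'' (a - m) x))"
    proof (rule sum.cong[OF refl])
      fix m assume "m \<in> {m. m \<le> a}"
      then have m: "m \<in> \<Delta>" "a - m \<in> \<Delta>" using down[OF True] diff_in[OF True] by auto
      show "(\<Sum>n\<in>{n. n \<le> a - m}. r m (r' n (r'' (a - m - n) x))) = r m (ser_mult \<Delta> r' r'' (a - m) x)"
        by (simp add: sm_in[OF m(2)] End_sum[OF SE_in[OF r m(1)]])
    qed
    also have "\<dots> = ser_mult \<Delta> r (ser_mult \<Delta> r' r'') a x"
      by (rule sm_in[OF True, symmetric])
    finally show ?thesis .
  qed (simp add: sm_out)
qed

lemma one_SE: "ser_one \<Delta> \<in> SE"
  using zero_in by (auto simp: ser_on_def ser_one_def End_k_def)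

lemma one_left: "(\<forall>a. a \<notin> \<Delta> \<longrightarrow> r a = (\<lambda>_. 0)) \<Longrightarrow> ser_mult \<Delta> (ser_one \<Delta>) r = r"
proof (intro ext)
  fix a x assume o: "\<forall>a. a \<notin> \<Delta> \<longrightarrow> r a = (\<lambda>_. 0)"
  show "ser_mult \<Delta> (ser_one \<Delta>) r a x = r a x"
  proof (cases "a \<in> \<Delta>")
    case True
    have "ser_mult \<Delta> (ser_one \<Delta>) r a x = (\<Sum>b\<in>{b. b \<le> a}. if b = z0 then r (a - b) x else 0)"
      using True by (auto simp: sm_in ser_one_def intro!: sum.cong)
    also have "\<dots> = r a x" using finite_L[OF True] by (simp add: sum.delta le_fun_def)
    finally show ?thesis .
  qed (use o in \<open>simp add: sm_out\<close>)
qed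

lemma one_right: "r \<in> SE \<Longrightarrow> ser_mult \<Delta> r (ser_one \<Delta>) = r"
proof (intro ext)
  fix a x assume r: "r \<in> SE"
  show "ser_mult \<Delta> r (ser_one \<Delta>) a x = r a x"
  proof (cases "a \<in> \<Delta>")
    case True
    have e: "b \<le> a \<Longrightarrow> (a - b = z0) = (b = a)" for b
      by (auto simp: le_fun_def fun_eq_iff intro: antisym)
    have "ser_mult \<Delta> r (ser_one \<Delta>) a x = (\<Sum>b\<in>{b. b \<le> a}. if b = a then r b x else 0)"
      using True down by (auto simp: sm_in ser_one_def e End_0[OF SE_in[OF r]] intro!: sum.cong)
    also have "\<dots> = r a x" using finite_L[OF True] by (simp add: sum.delta)
    finally show ?thesis .
  qed (use r in \<open>simp add: sm_out SE_out\<close>)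
qed


lemma sm_z0: "ser_mult \<Delta> r r' z0 x = r z0 (r' z0 x)"
  using zero_in by (simp add: sm_in L_zero)

lemma left_inv_ex:
  assumes r: "r \<in> SE" and r0: "r z0 = id"
  shows "\<exists>r'. r' \<in> SE \<and> ser_mult \<Delta> r' r = ser_one \<Delta>"
proof -
  define Y where "Y = (\<lambda>a. if a = z0 then (\<lambda>_. 0) else (\<lambda>x. - r a x))"
  define P where "P n = ((\<lambda>q. ser_mult \<Delta> q Y) ^^ n) (ser_one \<Delta>)" for n
  have P0: "P 0 = ser_one \<Delta>" by (simp add: P_def)
  have PS: "P (Suc n) = ser_mult \<Delta> (P n) Y" for n by (simp add: P_def)
  have YSE: "Y \<in> SE"
  proof -
    have "Y a \<in> End_k \<iota>" if "a \<in> \<Delta>" for a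
      using SE_in[OF r that] by (auto simp: Y_def End_k_def)
    moreover have "Y a = (\<lambda>_. 0)" if "a \<notin> \<Delta>" for a
      using that zero_in SE_out[OF r that] by (auto simp: Y_def)
    ultimately show ?thesis unfolding ser_on_def by blast
  qed
  have PSE: "P n \<in> SE" for n
    by (induction n) (auto simp: P0 PS one_SE intro: sm_SE YSE)
  have Pvan: "a \<in> \<Delta> \<Longrightarrow> mdeg p a < n \<Longrightarrow> P n a x = 0" for n a x
  proof (induction n arbitrary: a x)
    case 0 then show ?case by simp
  next
    case (Suc m)
    have "P (Suc m) a x = (\<Sum>b\<in>{b. b \<le> a}. P m b (Y (a - b) x))"
      by (simp add: PS sm_in[OF Suc.prems(1)])
    also have "\<dots> = 0"
    proof (rule sum.neutral, rule ballI)
      fix b assume b: "b \<in> {b. b \<le> a}"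
      show "P m b (Y (a - b) x) = 0"
      proof (cases "b = a")
        case True
        then show ?thesis using End_0[OF SE_in[OF PSE Suc.prems(1)]] by (simp add: Y_def)
      next
        case False
        then have "mdeg p b < m" using mdeg_less[OF Suc.prems(1)] b Suc.prems(2) by fastforce
        then show ?thesis using Suc.IH down[OF Suc.prems(1)] b by auto
      qed
    qed
    finally show ?case .
  qed
  have Pstep: "ser_mult \<Delta> (P n) r a x = P n a x - P (Suc n) a x" if a: "a \<in> \<Delta>" for n a x
  proof -
    have "ser_mult \<Delta> (P n) r a x = (\<Sum>b\<in>{b. b \<le> a}. P n b (ser_one \<Delta> (a - b) x) - P n b (Y (a - b) x))"
    proof (rule trans[OF sm_in[OF a]], rule sum.cong[OF refl])
      fix b assume "b \<in> {b. b \<le> a}"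
      then have b: "b \<in> \<Delta>" using down[OF a] by auto
      have "r (a - b) x = ser_one \<Delta> (a - b) x - Y (a - b) x"
        using r0 by (simp add: ser_one_def Y_def)
      then show "P n b (r (a - b) x) = P n b (ser_one \<Delta> (a - b) x) - P n b (Y (a - b) x)"
        by (simp add: End_diff[OF SE_in[OF PSE b]])
    qed
    also have "\<dots> = ser_mult \<Delta> (P n) (ser_one \<Delta>) a x - ser_mult \<Delta> (P n) Y a x"
      by (simp add: sum_subtractf sm_in[OF a])
    also have "\<dots> = P n a x - P (Suc n) a x"
      by (simp add: one_right[OF PSE] PS)
    finally show ?thesis .
  qed
  define E where "E a x = (\<Sum>n\<le>mdeg p a. P n a x)" for a x
  have ESE: "E \<in> SE"
  proof -
    have "E a \<in> End_k \<iota>" if "a \<in> \<Delta>" for a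
      unfolding E_def[abs_def] by (rule End_sumI) (rule SE_in[OF PSE that])
    moreover have "E a = (\<lambda>_. 0)" if "a \<notin> \<Delta>" for a
      using SE_out[OF PSE that] by (simp add: E_def[abs_def])
    ultimately show ?thesis unfolding ser_on_def by blast
  qed
  have "ser_mult \<Delta> E r = ser_one \<Delta>"
  proof (intro ext)
    fix a x
    show "ser_mult \<Delta> E r a x = ser_one \<Delta> a x"
    proof (cases "a \<in> \<Delta>")
      case True
      have "ser_mult \<Delta> E r a x = (\<Sum>b\<in>{b. b \<le> a}. \<Sum>n\<le>mdeg p b. P n b (r (a - b) x))"
        by (simp add: sm_in[OF True] E_def)
      also have "\<dots> = (\<Sum>b\<in>{b. b \<le> a}. \<Sum>n\<le>mdeg p a. P n b (r (a - b) x))"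
      proof (rule sum.cong[OF refl])
        fix b assume "b \<in> {b. b \<le> a}"
        then have b: "b \<in> \<Delta>" "b \<le> a" using down[OF True] by auto
        have "mdeg p b \<le> mdeg p a" using mdeg_le_split[OF b(2), of p] by simp
        then show "(\<Sum>n\<le>mdeg p b. P n b (r (a - b) x)) = (\<Sum>n\<le>mdeg p a. P n b (r (a - b) x))"
          by (intro sum.mono_neutral_left) (auto simp: Pvan[OF b(1)])
      qed
      also have "\<dots> = (\<Sum>n\<le>mdeg p a. ser_mult \<Delta> (P n) r a x)"
        by (subst sum.swap) (simp add: sm_in[OF True])
      also have "\<dots> = (\<Sum>n<Suc (mdeg p a). P n a x - P (Suc n) a x)"
        by (simp add: Pstep[OF True] lessThan_Suc_atMost)
      also have "\<dots> = P 0 a x - P (Suc (mdeg p a)) a x"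
        by (rule sum_lessThan_telescope')
      also have "\<dots> = ser_one \<Delta> a x"
        by (simp add: P0 Pvan[OF True])
      finally show ?thesis .
    next
      case False
      then show ?thesis using zero_in SE_out[OF ESE False]
        by (auto simp: sm_out ser_one_def)
    qed
  qed
  then show ?thesis using ESE by blast
qed

lemma left_inv_0: "r \<in> SE \<Longrightarrow> ser_mult \<Delta> r' r = ser_one \<Delta> \<Longrightarrow> r z0 = id \<Longrightarrow> r' z0 = id"
  by (rule ext) (metis sm_z0 ser_one_def id_apply)

lemma inv_props:
  assumes D: "D \<in> U_group \<iota> \<Delta>"
  shows "ser_inv \<iota> \<Delta> D \<in> SE" "ser_mult \<Delta> (ser_inv \<iota> \<Delta> D) D = ser_one \<Delta>"
    "ser_mult \<Delta> D (ser_inv \<iota> \<Delta> D) = ser_one \<Delta>"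
proof -
  have DSE: "D \<in> SE" and D0: "D z0 = id" using D by (auto simp: U_group_def)
  obtain E where E: "E \<in> SE" "ser_mult \<Delta> E D = ser_one \<Delta>" using left_inv_ex[OF DSE D0] by blast
  have E0: "E z0 = id" by (rule left_inv_0[OF DSE E(2) D0])
  obtain F where F: "F \<in> SE" "ser_mult \<Delta> F E = ser_one \<Delta>" using left_inv_ex[OF E(1) E0] by blast
  have DOut: "\<forall>a. a \<notin> \<Delta> \<longrightarrow> D a = (\<lambda>_. 0)" using SE_out[OF DSE] by blast
  have EOut: "\<forall>a. a \<notin> \<Delta> \<longrightarrow> E a = (\<lambda>_. 0)" using SE_out[OF E(1)] by blast
  have "F = ser_mult \<Delta> F (ser_mult \<Delta> E D)" using one_right[OF F(1)] E(2) by simp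
  also have "\<dots> = D" using assoc[OF F(1), of E D, symmetric] F(2) one_left[OF DOut] by simp
  finally have DE: "ser_mult \<Delta> D E = ser_one \<Delta>" using F(2) by simp
  have uniq: "E2 = E" if "E2 \<in> SE \<and> ser_mult \<Delta> E2 D = ser_one \<Delta>" for E2
  proof -
    have "E2 = ser_mult \<Delta> E2 (ser_mult \<Delta> D E)" using one_right[OF conjunct1[OF that]] DE by simp
    also have "\<dots> = E"
      by (simp only: assoc[of E2 D E, OF conjunct1[OF that], symmetric] conjunct2[OF that] one_left[OF EOut])
    finally show ?thesis .
  qed
  have "ser_inv \<iota> \<Delta> D = E"
    unfolding ser_inv_def
  proof (rule the_equality)
    show "E \<in> SE \<and> ser_mult \<Delta> E D = ser_one \<Delta>" using E by blast
  qed (rule uniq)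
  then show "ser_inv \<iota> \<Delta> D \<in> SE" "ser_mult \<Delta> (ser_inv \<iota> \<Delta> D) D = ser_one \<Delta>"
    "ser_mult \<Delta> D (ser_inv \<iota> \<Delta> D) = ser_one \<Delta>" using E DE by auto
qed


lemma key:
  assumes a: "a \<in> \<Delta>" and DSE: "D \<in> SE"
    and hs: "\<And>b u v. b \<le> a \<Longrightarrow> b \<noteq> a \<Longrightarrow> D b (u * v) = (\<Sum>m\<in>{m. m \<le> b}. D m u * D (b - m) v)"
    and h2: "(\<forall>u v. D a (u * v) = (\<Sum>m\<in>{m. m \<le> a}. D m u * D (a - m) v)) \<or> (\<forall>u. e z0 u = 0)"
  shows "(\<Sum>b\<in>{b. b \<le> a}. D b (x * e (a - b) y + e (a - b) x * y))
       = (\<Sum>m\<in>{m. m \<le> a}. D m x * ser_mult \<Delta> D e (a - m) y + ser_mult \<Delta> D e m x * D (a - m) y)"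
proof -
  have s1: "D b (x * e (a - b) y + e (a - b) x * y)
     = (\<Sum>m\<in>{m. m \<le> b}. D m x * D (b - m) (e (a - b) y))
     + (\<Sum>m\<in>{m. m \<le> b}. D (b - m) (e (a - b) x) * D m y)" if b: "b \<le> a" for b
  proof -
    have bD: "b \<in> \<Delta>" using down[OF a b] .
    have Db: "D b \<in> End_k \<iota>" by (rule SE_in[OF DSE bD])
    have r: "(\<Sum>m\<in>{m. m \<le> b}. D m u * D (b - m) v) = (\<Sum>m\<in>{m. m \<le> b}. D (b - m) u * D m v)" for u v
      by (rule refl_sum[OF bD])
    show ?thesis
    proof (cases "b \<noteq> a \<or> (\<forall>u v. D a (u * v) = (\<Sum>m\<in>{m. m \<le> a}. D m u * D (a - m) v))")
      case True
      then have hb: "D b (u * v) = (\<Sum>m\<in>{m. m \<le> b}. D m u * D (b - m) v)" for u v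
        using hs[OF b] by (cases "b = a") auto
      show ?thesis by (simp add: End_add[OF Db] hb r)
    next
      case False
      then have ba: "b = a" and e0: "\<forall>u. e z0 u = 0" using h2 by auto
      have D0: "D m 0 = 0" if "m \<le> a" for m using End_0[OF SE_in[OF DSE down[OF a that]]] .
      have D0': "D (a - m) 0 = 0" for m using End_0[OF SE_in[OF DSE diff_in[OF a]]] .
      show ?thesis using ba e0 D0 D0' End_0[OF Db] by simp
    qed
  qed
  have fin: "finite {b. b \<le> a}" by (rule finite_L[OF a])
  have "(\<Sum>b\<in>{b. b \<le> a}. D b (x * e (a - b) y + e (a - b) x * y))
     = (\<Sum>b\<in>{b. b \<le> a}. \<Sum>m\<in>{m. m \<le> b}. D m x * D (b - m) (e (a - b) y))
     + (\<Sum>b\<in>{b. b \<le> a}. \<Sum>m\<in>{m. m \<le> b}. D (b - m) (e (a - b) x) * D m y)"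
    by (simp add: s1 sum.distrib)
  also have "(\<Sum>b\<in>{b. b \<le> a}. \<Sum>m\<in>{m. m \<le> b}. D m x * D (b - m) (e (a - b) y))
     = (\<Sum>m\<in>{m. m \<le> a}. \<Sum>n\<in>{n. n \<le> a - m}. D m x * D n (e (a - m - n) y))"
    by (rule triple[OF a])
  also have "\<dots> = (\<Sum>m\<in>{m. m \<le> a}. D m x * ser_mult \<Delta> D e (a - m) y)"
    by (rule sum.cong[OF refl]) (simp add: sm_in[OF diff_in[OF a]] sum_distrib_left)
  also have "(\<Sum>b\<in>{b. b \<le> a}. \<Sum>m\<in>{m. m \<le> b}. D (b - m) (e (a - b) x) * D m y)
     = (\<Sum>m\<in>{m. m \<le> a}. \<Sum>n\<in>{n. n \<le> a - m}. D n (e (a - m - n) x) * D m y)"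
    by (rule triple[OF a])
  also have "\<dots> = (\<Sum>m\<in>{m. m \<le> a}. ser_mult \<Delta> D e (a - m) x * D m y)"
    by (rule sum.cong[OF refl]) (simp add: sm_in[OF diff_in[OF a]] sum_distrib_right)
  also have "\<dots> = (\<Sum>m\<in>{m. m \<le> a}. ser_mult \<Delta> D e m x * D (a - m) y)"
    by (rule refl_sum[OF a, symmetric])
  finally show ?thesis by (simp only: sum.distrib)
qed

lemma uniq0:
  assumes DSE: "D \<in> SE" and D0: "D z0 = id"
    and h: "\<And>g. g \<in> \<Delta> \<Longrightarrow> (\<Sum>b\<in>{b. b \<le> g}. D b (u (g - b))) = 0"
  shows "g \<in> \<Delta> \<Longrightarrow> u g = 0"
proof (induction "mdeg p g" arbitrary: g rule: less_induct)
  case less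
  have fin: "finite {b. b \<le> g}" by (rule finite_L[OF less.prems])
  have z: "z0 \<in> {b. b \<le> g}" by (simp add: le_fun_def)
  have "0 = (\<Sum>b\<in>{b. b \<le> g}. D b (u (g - b)))" using h[OF less.prems] by simp
  also have "\<dots> = D z0 (u (g - z0)) + (\<Sum>b\<in>{b. b \<le> g} - {z0}. D b (u (g - b)))"
    by (rule sum.remove[OF fin z])
  also have "(\<Sum>b\<in>{b. b \<le> g} - {z0}. D b (u (g - b))) = 0"
  proof (rule sum.neutral, rule ballI)
    fix b assume b: "b \<in> {b. b \<le> g} - {z0}"
    then have "mdeg p (g - b) < mdeg p g" using mdeg_less2[OF less.prems] by auto
    then have "u (g - b) = 0" using less.hyps diff_in[OF less.prems] by blast
    then show "D b (u (g - b)) = 0" using End_0[OF SE_in[OF DSE down[OF less.prems]]] b by auto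
  qed
  finally show ?case using D0 by simp
qed


lemma kmono_in: "a \<in> \<Delta> \<Longrightarrow> kmono a \<in> ser_on \<Delta> 0 UNIV"
  by (auto simp: ser_on_def kmono_def)

lemma kmult_left: "g \<in> \<Delta> \<Longrightarrow> kser_mult \<Delta> (kmono b) h g = (if b \<le> g then h (g - b) else 0)"
proof -
  assume g: "g \<in> \<Delta>"
  have "kser_mult \<Delta> (kmono b) h g = (\<Sum>\<beta>\<in>{\<beta>. \<beta> \<le> g}. if \<beta> = b then h (g - \<beta>) else 0)"
    using g by (auto simp: kser_mult_def kmono_def intro!: sum.cong)
  then show ?thesis using finite_L[OF g] by (simp add: sum.delta)
qed

lemma kmult_right: "g \<in> \<Delta> \<Longrightarrow> kser_mult \<Delta> h (kmono m) g = (if m \<le> g then h (g - m) else 0)"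
proof -
  assume g: "g \<in> \<Delta>"
  have "kser_mult \<Delta> h (kmono m) g = (\<Sum>b\<in>{b. b \<le> g}. h b * kmono m (g - b))"
    using g by (simp add: kser_mult_def)
  also have "\<dots> = (\<Sum>b\<in>{b. b \<le> g}. h (g - b) * kmono m b)"
    by (rule refl_sum[OF g])
  also have "\<dots> = (\<Sum>\<beta>\<in>{\<beta>. \<beta> \<le> g}. if \<beta> = m then h (g - \<beta>) else 0)"
    by (auto simp: kmono_def intro!: sum.cong)
  also have "\<dots> = (if m \<le> g then h (g - m) else 0)"
    using finite_L[OF g] by (simp add: sum.delta)
  finally show ?thesis .
qed

lemma kmult_mono: "kser_mult \<Delta> (kmono b) (kmono m) = (if madd b m \<in> \<Delta> then kmono (madd b m) else (\<lambda>_. 0))"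
proof (rule ext)
  fix g
  show "kser_mult \<Delta> (kmono b) (kmono m) g = (if madd b m \<in> \<Delta> then kmono (madd b m) else (\<lambda>_. 0)) g"
  proof (cases "g \<in> \<Delta>")
    case True
    have e: "(b \<le> g \<and> g - b = m) = (g = madd b m)"
      by (auto simp: le_fun_def fun_eq_iff madd_def) (metis le_add_diff_inverse)
    have "kser_mult \<Delta> (kmono b) (kmono m) g = (if b \<le> g then kmono m (g - b) else 0)"
      by (rule kmult_left[OF True])
    then show ?thesis using True e
      by (auto simp: kmono_def)
  next
    case False
    then show ?thesis by (auto simp: kser_mult_def kmono_def)
  qed
qed

context
  fixes d :: "((nat \<Rightarrow> nat) \<Rightarrow> 'k) \<Rightarrow> ((nat \<Rightarrow> nat) \<Rightarrow> 'k)"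
  assumes der: "is_kser_derivation \<Delta> d"
begin

lemma d_ser: "f \<in> ser_on \<Delta> 0 UNIV \<Longrightarrow> d f \<in> ser_on \<Delta> 0 UNIV"
  using der by (simp add: is_kser_derivation_def)

lemma d_zero: "d (\<lambda>_. 0) = (\<lambda>_. 0)"
proof -
  have z: "(\<lambda>_. 0::'k) \<in> ser_on \<Delta> 0 UNIV" by (simp add: ser_on_def)
  have h: "\<forall>f\<in>ser_on \<Delta> 0 UNIV. \<forall>c. d (\<lambda>\<alpha>. c * f \<alpha>) = (\<lambda>\<alpha>. c * d f \<alpha>)"
    using der by (simp add: is_kser_derivation_def)
  show ?thesis using spec[OF bspec[OF h z], of 0] by simp
qed

lemma d_leib: "f \<in> ser_on \<Delta> 0 UNIV \<Longrightarrow> g \<in> ser_on \<Delta> 0 UNIV \<Longrightarrow>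
   d (kser_mult \<Delta> f g) = (\<lambda>\<alpha>. kser_mult \<Delta> f (d g) \<alpha> + kser_mult \<Delta> (d f) g \<alpha>)"
  using der by (simp add: is_kser_derivation_def)

lemma d_out: "a \<in> \<Delta> \<Longrightarrow> g \<notin> \<Delta> \<Longrightarrow> d (kmono a) g = 0"
  using d_ser[OF kmono_in] by (simp add: ser_on_def)

lemma F3:
  assumes b: "b \<in> \<Delta>" and m: "m \<in> \<Delta>" and g: "g \<in> \<Delta>"
  shows "(if madd b m \<in> \<Delta> then d (kmono (madd b m)) g else 0)
    = (if b \<le> g then d (kmono m) (g - b) else 0) + (if m \<le> g then d (kmono b) (g - m) else 0)"
proof -
  have "d (kser_mult \<Delta> (kmono b) (kmono m)) g
      = kser_mult \<Delta> (kmono b) (d (kmono m)) g + kser_mult \<Delta> (d (kmono b)) (kmono m) g"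
    using d_leib[OF kmono_in[OF b] kmono_in[OF m]] by simp
  moreover have "d (kser_mult \<Delta> (kmono b) (kmono m)) g = (if madd b m \<in> \<Delta> then d (kmono (madd b m)) g else 0)"
    by (simp add: kmult_mono d_zero)
  ultimately show ?thesis by (simp add: kmult_left[OF g] kmult_right[OF g])
qed

lemma deg_bound: "a \<in> \<Delta> \<Longrightarrow> d (kmono a) g \<noteq> 0 \<Longrightarrow> mdeg p a \<le> mdeg p g + 1"
proof (induction "mdeg p a" arbitrary: a g rule: less_induct)
  case less
  show ?case
  proof (cases "mdeg p a \<le> 1")
    case True then show ?thesis by simp
  next
    case False
    have gD: "g \<in> \<Delta>" using d_out less.prems by blast
    have "a \<noteq> z0" using False by (auto simp: mdeg_def)
    then obtain i where ai: "a i \<noteq> 0" by auto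
    have ip: "i < p"
    proof (rule ccontr)
      assume "\<not> i < p"
      then have "a i = 0" using supp[OF less.prems(1), of i] by simp
      then show False using ai by simp
    qed
    have i: "i < p" "a i > 0" using ip ai by auto
    define e where "e = (\<lambda>j. if j = i then 1 else 0 :: nat)"
    have ea: "e \<le> a" using i by (auto simp: e_def le_fun_def)
    have eD: "e \<in> \<Delta>" using down[OF less.prems(1) ea] .
    have aeD: "a - e \<in> \<Delta>" using diff_in[OF less.prems(1)] .
    have me: "mdeg p e = 1" using i by (simp add: mdeg_def e_def)
    have mae: "mdeg p a = 1 + mdeg p (a - e)" using mdeg_le_split[OF ea, of p] me by simp
    have ma: "madd e (a - e) = a" by (rule madd_diff[OF ea])
    have "d (kmono a) g = (if e \<le> g then d (kmono (a - e)) (g - e) else 0)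
                       + (if a - e \<le> g then d (kmono e) (g - (a - e)) else 0)"
      using F3[OF eD aeD gD] ma less.prems(1) by simp
    then consider "e \<le> g" "d (kmono (a - e)) (g - e) \<noteq> 0" | "a - e \<le> g"
      using less.prems(2) by (auto split: if_splits)
    then show ?thesis
    proof cases
      case 1
      have "mdeg p (a - e) \<le> mdeg p (g - e) + 1"
        using less.hyps[OF _ aeD 1(2)] mae by simp
      moreover have "mdeg p g = 1 + mdeg p (g - e)" using mdeg_le_split[OF 1(1), of p] me by simp
      ultimately show ?thesis using mae by simp
    next
      case 2
      have "mdeg p g = mdeg p (a - e) + mdeg p (g - (a - e))" by (rule mdeg_le_split[OF 2])
      then show ?thesis using mae by simp
    qed
  qed
qed

end


context
  fixes d :: "((nat \<Rightarrow> nat) \<Rightarrow> 'k) \<Rightarrow> ((nat \<Rightarrow> nat) \<Rightarrow> 'k)"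
  assumes der: "is_kser_derivation \<Delta> d"
begin

lemma dstar:
  assumes DHS: "D \<in> HS \<iota> \<Delta>" and g: "g \<in> \<Delta>"
  shows "dR \<iota> \<Delta> d D g (x * y)
    = (\<Sum>b\<in>{b. b \<le> g}. D b x * dR \<iota> \<Delta> d D (g - b) y + dR \<iota> \<Delta> d D b x * D (g - b) y)"
proof -
  have DSE: "D \<in> SE" and hs: "\<And>a u v. a \<in> \<Delta> \<Longrightarrow> D a (u * v) = (\<Sum>b\<in>{b. b \<le> a}. D b u * D (a - b) v)"
    using DHS by (auto simp: HS_def)
  define n where "n = mdeg p g + 1"
  define T where "T = {a\<in>\<Delta>. mdeg p a \<le> n}"
  define c where "c a h = d (kmono a) h" for a h
  have fT: "finite T" unfolding T_def by (rule finite_deg)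
  have dT: "\<forall>a\<in>T. \<forall>b. b \<le> a \<longrightarrow> b \<in> T"
    unfolding T_def using down mdeg_le_split by fastforce
  have TD: "T \<subseteq> \<Delta>" by (auto simp: T_def)
  have LgT: "{b. b \<le> g} \<subseteq> T"
    unfolding T_def n_def using down[OF g] mdeg_le_split by fastforce
  have Mform: "dR \<iota> \<Delta> d D h z = (\<Sum>a\<in>T. \<iota> (c a h) * D a z)" if h: "mdeg p h \<le> mdeg p g" for h z
    unfolding dR_def c_def
  proof (rule sum.mono_neutral_left[OF fT])
    show "{a \<in> \<Delta>. d (kmono a) h \<noteq> 0} \<subseteq> T"
      using deg_bound[OF der] h by (fastforce simp: T_def n_def)
  qed (auto simp: iota_0 T_def)
  have CT: "(if madd b m \<in> T then c (madd b m) g else 0) = (if madd b m \<in> \<Delta> then c (madd b m) g else 0)" for b m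
    using deg_bound[OF der, of "madd b m" g] by (auto simp: T_def n_def c_def)
  have "dR \<iota> \<Delta> d D g (x * y) = (\<Sum>a\<in>T. \<iota> (c a g) * D a (x * y))"
    by (rule Mform) simp
  also have "\<dots> = (\<Sum>a\<in>T. \<Sum>b\<in>{b. b \<le> a}. \<iota> (c a g) * (D b x * D (a - b) y))"
    by (rule sum.cong[OF refl]) (use TD in \<open>auto simp: hs sum_distrib_left\<close>)
  also have "\<dots> = (\<Sum>(b,m)\<in>T\<times>T. if madd b m \<in> T then \<iota> (c (madd b m) g) * (D b x * D (madd b m - b) y) else 0)"
    by (rule pairs[OF fT dT])
  also have "\<dots> = (\<Sum>b\<in>T. \<Sum>m\<in>T. \<iota> (if madd b m \<in> \<Delta> then c (madd b m) g else 0) * (D b x * D m y))"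
    unfolding sum.cartesian_product
    by (rule sum.cong[OF refl]) (auto simp: madd_diff2 CT[symmetric] iota_0)
  finally have L: "dR \<iota> \<Delta> d D g (x * y) = \<dots>" .
  have R1: "(\<Sum>b\<in>{b. b \<le> g}. D b x * dR \<iota> \<Delta> d D (g - b) y)
     = (\<Sum>b\<in>T. \<Sum>m\<in>T. \<iota> (if b \<le> g then c m (g - b) else 0) * (D b x * D m y))"
  proof -
    have "(\<Sum>b\<in>{b. b \<le> g}. D b x * dR \<iota> \<Delta> d D (g - b) y)
       = (\<Sum>b\<in>{b. b \<le> g}. \<Sum>m\<in>T. \<iota> (c m (g - b)) * (D b x * D m y))"
    proof (rule sum.cong[OF refl])
      fix b assume "b \<in> {b. b \<le> g}"
      then have "mdeg p (g - b) \<le> mdeg p g" using mdeg_le_split[of b g p] by simp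
      then show "D b x * dR \<iota> \<Delta> d D (g - b) y = (\<Sum>m\<in>T. \<iota> (c m (g - b)) * (D b x * D m y))"
        by (simp add: Mform sum_distrib_left mult.left_commute)
    qed
    also have "\<dots> = (\<Sum>b\<in>T. if b \<in> {b. b \<le> g} then (\<Sum>m\<in>T. \<iota> (c m (g - b)) * (D b x * D m y)) else 0)"
      using sum.inter_restrict[OF fT, of "\<lambda>b. \<Sum>m\<in>T. \<iota> (c m (g - b)) * (D b x * D m y)" "{b. b \<le> g}"] LgT
      by (simp add: Int_absorb1)
    also have "\<dots> = (\<Sum>b\<in>T. \<Sum>m\<in>T. \<iota> (if b \<le> g then c m (g - b) else 0) * (D b x * D m y))"
      by (rule sum.cong[OF refl]) (auto simp: iota_0)
    finally show ?thesis .
  qed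
  have R2: "(\<Sum>b\<in>{b. b \<le> g}. dR \<iota> \<Delta> d D b x * D (g - b) y)
     = (\<Sum>b\<in>T. \<Sum>m\<in>T. \<iota> (if m \<le> g then c b (g - m) else 0) * (D b x * D m y))"
  proof -
    have "(\<Sum>b\<in>{b. b \<le> g}. dR \<iota> \<Delta> d D b x * D (g - b) y)
        = (\<Sum>b\<in>{b. b \<le> g}. dR \<iota> \<Delta> d D (g - b) x * D b y)"
      by (rule refl_sum[OF g])
    also have "\<dots> = (\<Sum>m\<in>{b. b \<le> g}. \<Sum>b\<in>T. \<iota> (c b (g - m)) * (D b x * D m y))"
    proof (rule sum.cong[OF refl])
      fix m assume "m \<in> {b. b \<le> g}"
      then have "mdeg p (g - m) \<le> mdeg p g" using mdeg_le_split[of m g p] by simp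
      then show "dR \<iota> \<Delta> d D (g - m) x * D m y = (\<Sum>b\<in>T. \<iota> (c b (g - m)) * (D b x * D m y))"
        by (simp add: Mform sum_distrib_right mult.assoc)
    qed
    also have "\<dots> = (\<Sum>m\<in>T. if m \<in> {b. b \<le> g} then (\<Sum>b\<in>T. \<iota> (c b (g - m)) * (D b x * D m y)) else 0)"
      using sum.inter_restrict[OF fT, of "\<lambda>m. \<Sum>b\<in>T. \<iota> (c b (g - m)) * (D b x * D m y)" "{b. b \<le> g}"] LgT
      by (simp add: Int_absorb1)
    also have "\<dots> = (\<Sum>m\<in>T. \<Sum>b\<in>T. \<iota> (if m \<le> g then c b (g - m) else 0) * (D b x * D m y))"
      by (rule sum.cong[OF refl]) (auto simp: iota_0)
    also have "\<dots> = (\<Sum>b\<in>T. \<Sum>m\<in>T. \<iota> (if m \<le> g then c b (g - m) else 0) * (D b x * D m y))"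
      by (rule sum.swap)
    finally show ?thesis .
  qed
  have pw: "\<iota> (if madd b m \<in> \<Delta> then c (madd b m) g else 0)
      = \<iota> (if b \<le> g then c m (g - b) else 0) + \<iota> (if m \<le> g then c b (g - m) else 0)"
    if "b \<in> T" "m \<in> T" for b m
  proof -
    have bm: "b \<in> \<Delta>" "m \<in> \<Delta>" using that TD by auto
    have e: "(if madd b m \<in> \<Delta> then c (madd b m) g else 0)
      = (if b \<le> g then c m (g - b) else 0) + (if m \<le> g then c b (g - m) else 0)"
      using F3[OF der bm g] unfolding c_def .
    show ?thesis by (simp only: e iota_add)
  qed
  have "(\<Sum>b\<in>{b. b \<le> g}. D b x * dR \<iota> \<Delta> d D (g - b) y + dR \<iota> \<Delta> d D b x * D (g - b) y)
     = (\<Sum>b\<in>T. \<Sum>m\<in>T. \<iota> (if b \<le> g then c m (g - b) else 0) * (D b x * D m y))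
       + (\<Sum>b\<in>T. \<Sum>m\<in>T. \<iota> (if m \<le> g then c b (g - m) else 0) * (D b x * D m y))"
    by (simp add: sum.distrib R1 R2)
  also have "\<dots> = (\<Sum>b\<in>T. \<Sum>m\<in>T. \<iota> (if madd b m \<in> \<Delta> then c (madd b m) g else 0) * (D b x * D m y))"
    by (simp add: sum.distrib[symmetric] pw distrib_right cong: sum.cong)
  finally show ?thesis using L by simp
qed

end


lemma End_scale: "f \<in> End_k \<iota> \<Longrightarrow> (\<lambda>z. k * f z) \<in> End_k \<iota>"
  by (auto simp: End_k_def distrib_left mult.left_commute)

lemma dR_SE:
  assumes DSE: "D \<in> SE" and der: "is_kser_derivation \<Delta> d"
  shows "dR \<iota> \<Delta> d D \<in> SE"
proof -
  have "dR \<iota> \<Delta> d D a \<in> End_k \<iota>" if "a \<in> \<Delta>" for a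
    unfolding dR_def
    by (rule End_sumI, rule End_scale, rule SE_in[OF DSE]) auto
  moreover have "dR \<iota> \<Delta> d D a = (\<lambda>_. 0)" if "a \<notin> \<Delta>" for a
  proof -
    have e: "{b \<in> \<Delta>. d (kmono b) a \<noteq> 0} = {}" using d_out[OF der _ that] by auto
    show ?thesis unfolding dR_def e sum.empty ..
  qed
  ultimately show ?thesis unfolding ser_on_def by blast
qed

lemma a_b:
  assumes DHS: "D \<in> HS \<iota> \<Delta>" and der: "is_kser_derivation \<Delta> d"
  shows "eps_d \<iota> \<Delta> d D \<in> ser_on \<Delta> (\<lambda>_. 0) (Der_k \<iota>)"
proof -
  have DSE: "D \<in> SE" and D0: "D z0 = id"
    and hs: "\<And>a u v. a \<in> \<Delta> \<Longrightarrow> D a (u * v) = (\<Sum>b\<in>{b. b \<le> a}. D b u * D (a - b) v)"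
    using DHS by (auto simp: HS_def)
  have DU: "D \<in> U_group \<iota> \<Delta>" using DSE D0 by (simp add: U_group_def)
  define E where "E = ser_inv \<iota> \<Delta> D"
  define M where "M = dR \<iota> \<Delta> d D"
  have ESE: "E \<in> SE" and DE: "ser_mult \<Delta> D E = ser_one \<Delta>"
    using inv_props[OF DU] by (auto simp: E_def)
  have MSE: "M \<in> SE" unfolding M_def by (rule dR_SE[OF DSE der])
  define e where "e = ser_mult \<Delta> E M"
  have epsd: "eps_d \<iota> \<Delta> d D = e" by (simp add: eps_d_def e_def E_def M_def)
  have eSE: "e \<in> SE" unfolding e_def by (rule sm_SE[OF ESE MSE])
  have MOut: "\<forall>a. a \<notin> \<Delta> \<longrightarrow> M a = (\<lambda>_. 0)" using SE_out[OF MSE] by blast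
  have DeM: "ser_mult \<Delta> D e = M"
    unfolding e_def by (simp only: assoc[OF DSE, of E M, symmetric] DE one_left[OF MOut])
  have leib: "e a (x * y) = x * e a y + e a x * y" if a: "a \<in> \<Delta>" for a x y
  proof -
    define u where "u h = e h (x * y) - (x * e h y + e h x * y)" for h
    have "u a = 0"
    proof (rule uniq0[OF DSE D0 _ a])
      fix g assume g: "g \<in> \<Delta>"
      have "(\<Sum>b\<in>{b. b \<le> g}. D b (u (g - b)))
        = (\<Sum>b\<in>{b. b \<le> g}. D b (e (g - b) (x * y))) - (\<Sum>b\<in>{b. b \<le> g}. D b (x * e (g - b) y + e (g - b) x * y))"
        unfolding u_def sum_subtractf[symmetric]
        by (rule sum.cong[OF refl]) (use End_diff[OF SE_in[OF DSE down[OF g]]] in auto)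
      also have "(\<Sum>b\<in>{b. b \<le> g}. D b (e (g - b) (x * y))) = M g (x * y)"
        using sm_in[OF g, of D e "x * y"] DeM by simp
      also have "(\<Sum>b\<in>{b. b \<le> g}. D b (x * e (g - b) y + e (g - b) x * y))
         = (\<Sum>m\<in>{m. m \<le> g}. D m x * ser_mult \<Delta> D e (g - m) y + ser_mult \<Delta> D e m x * D (g - m) y)"
        by (rule key[OF g DSE]) (auto intro: hs down[OF g] simp: hs[OF g])
      also have "\<dots> = M g (x * y)"
        unfolding DeM M_def by (rule dstar[OF der DHS g, symmetric])
      finally show "(\<Sum>b\<in>{b. b \<le> g}. D b (u (g - b))) = 0" by (simp only: diff_self)
    qed
    then show ?thesis by (simp add: u_def)
  qed
  have "e \<in> ser_on \<Delta> (\<lambda>_. 0) (Der_k \<iota>)"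
    using SE_in[OF eSE] SE_out[OF eSE] leib by (auto simp: ser_on_def Der_k_def)
  then show ?thesis by (simp add: epsd)
qed

lemma chi_der: "is_kser_derivation \<Delta> (\<lambda>f a. (of_nat (mdeg p a) :: 'k) * f a)"
  unfolding is_kser_derivation_def
proof (intro conjI ballI allI)
  fix f g :: "(nat \<Rightarrow> nat) \<Rightarrow> 'k"
  show "(\<lambda>a. of_nat (mdeg p a) * kser_mult \<Delta> f g a) =
       (\<lambda>\<alpha>. kser_mult \<Delta> f (\<lambda>a. of_nat (mdeg p a) * g a) \<alpha> + kser_mult \<Delta> (\<lambda>a. of_nat (mdeg p a) * f a) g \<alpha>)"
  proof (rule ext)
    fix a
    show "of_nat (mdeg p a) * kser_mult \<Delta> f g a =
       kser_mult \<Delta> f (\<lambda>a. of_nat (mdeg p a) * g a) a + kser_mult \<Delta> (\<lambda>a. of_nat (mdeg p a) * f a) g a"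
    proof (cases "a \<in> \<Delta>")
      case True
      have "of_nat (mdeg p a) * kser_mult \<Delta> f g a = (\<Sum>b\<in>{b. b \<le> a}. of_nat (mdeg p a) * (f b * g (a - b)))"
        using True by (simp add: kser_mult_def sum_distrib_left)
      also have "\<dots> = (\<Sum>b\<in>{b. b \<le> a}. f b * (of_nat (mdeg p (a - b)) * g (a - b)) + of_nat (mdeg p b) * f b * g (a - b))"
      proof (rule sum.cong[OF refl])
        fix b assume "b \<in> {b. b \<le> a}"
        then have "mdeg p a = mdeg p b + mdeg p (a - b)" by (simp add: mdeg_le_split)
        then show "of_nat (mdeg p a) * (f b * g (a - b)) = f b * (of_nat (mdeg p (a - b)) * g (a - b)) + of_nat (mdeg p b) * f b * g (a - b)"
          by (simp add: algebra_simps)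
      qed
      also have "\<dots> = kser_mult \<Delta> f (\<lambda>a. of_nat (mdeg p a) * g a) a + kser_mult \<Delta> (\<lambda>a. of_nat (mdeg p a) * f a) g a"
        using True by (simp add: kser_mult_def sum.distrib)
      finally show ?thesis .
    qed (simp add: kser_mult_def)
  qed
qed (auto simp: ser_on_def algebra_simps)

lemma chi_dR:
  assumes DSE: "D \<in> SE"
  shows "dR \<iota> \<Delta> (\<lambda>f a. (of_nat (mdeg p a) :: 'k) * f a) D = (\<lambda>a x. of_nat (mdeg p a) * D a x)"
proof (intro ext)
  fix g x
  have S: "{a \<in> \<Delta>. of_nat (mdeg p g) * kmono a g \<noteq> (0::'k)}
     = (if g \<in> \<Delta> \<and> of_nat (mdeg p g) \<noteq> (0::'k) then {g} else {})"
    by (auto simp: kmono_def)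
  show "dR \<iota> \<Delta> (\<lambda>f a. (of_nat (mdeg p a) :: 'k) * f a) D g x = of_nat (mdeg p g) * D g x"
  proof (cases "g \<in> \<Delta>")
    case True
    show ?thesis
    proof (cases "of_nat (mdeg p g) = (0::'k)")
      case True
      then have "(of_nat (mdeg p g) :: 'a) = 0" using iota_of_nat[of "mdeg p g"] iota_0 by simp
      then show ?thesis using True unfolding dR_def S by simp
    next
      case False
      then show ?thesis using \<open>g \<in> \<Delta>\<close> unfolding dR_def S by (simp add: kmono_def iota_of_nat)
    qed
  next
    case False
    then show ?thesis using SE_out[OF DSE False] unfolding dR_def S by simp
  qed
qed


lemma c_a:
  assumes Q: "Q_subring TYPE('k)" and DU: "D \<in> U_group \<iota> \<Delta>"
    and epsD: "eps \<iota> p \<Delta> D \<in> ser_on \<Delta> (\<lambda>_. 0) (Der_k \<iota>)"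
  shows "D \<in> HS \<iota> \<Delta>"
proof -
  have DSE: "D \<in> SE" and D0: "D z0 = id" using DU by (auto simp: U_group_def)
  define E where "E = ser_inv \<iota> \<Delta> D"
  define N where "N = (\<lambda>a x. (of_nat (mdeg p a) :: 'a) * D a x)"
  have ESE: "E \<in> SE" and DE: "ser_mult \<Delta> D E = ser_one \<Delta>"
    using inv_props[OF DU] by (auto simp: E_def)
  define e where "e = ser_mult \<Delta> E N"
  have epse: "eps \<iota> p \<Delta> D = e" by (simp add: eps_def e_def E_def N_def)
  have NOut: "\<forall>a. a \<notin> \<Delta> \<longrightarrow> N a = (\<lambda>_. 0)" using SE_out[OF DSE] by (simp add: N_def)
  have DeN: "ser_mult \<Delta> D e = N"
    unfolding e_def by (simp only: assoc[OF DSE, of E N, symmetric] DE one_left[OF NOut])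
  have e0: "\<forall>u. e z0 u = 0"
    using End_0[OF SE_in[OF ESE zero_in]] by (simp add: e_def sm_z0 N_def mdeg_def)
  have leib: "e h (x * y) = x * e h y + e h x * y" if "h \<in> \<Delta>" for h x y
    using epsD that by (auto simp: epse ser_on_def Der_k_def)
  have main: "\<forall>u v. D a (u * v) = (\<Sum>b\<in>{b. b \<le> a}. D b u * D (a - b) v)" if "a \<in> \<Delta>" for a
    using that
  proof (induction "mdeg p a" arbitrary: a rule: less_induct)
    case less
    note a = less.prems
    show ?case
    proof (cases "a = z0")
      case True
      then show ?thesis using D0 by (simp add: L_zero)
    next
      case False
      define n where "n = mdeg p a"
      have npos: "n > 0" using mdeg_pos[OF a False] by (simp add: n_def)
      obtain w :: 'k where w: "of_nat n * w = 1" using Q npos by (auto simp: Q_subring_def)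
      have wi: "\<iota> w * of_nat n = (1 :: 'a)"
        using arg_cong[OF w, of \<iota>] by (simp add: iota_mult iota_of_nat iota_1 mult.commute)
      show ?thesis
      proof (intro allI)
        fix u v
        have "of_nat n * D a (u * v) = N a (u * v)" by (simp add: N_def n_def)
        also have "\<dots> = (\<Sum>b\<in>{b. b \<le> a}. D b (e (a - b) (u * v)))"
          using sm_in[OF a, of D e "u * v"] DeN by simp
        also have "\<dots> = (\<Sum>b\<in>{b. b \<le> a}. D b (u * e (a - b) v + e (a - b) u * v))"
          by (rule sum.cong[OF refl]) (simp add: leib[OF diff_in[OF a]])
        also have "\<dots> = (\<Sum>m\<in>{m. m \<le> a}. D m u * ser_mult \<Delta> D e (a - m) v + ser_mult \<Delta> D e m u * D (a - m) v)"
        proof (rule key[OF a DSE])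
          fix b u' v' assume b: "b \<le> a" "b \<noteq> a"
          have "mdeg p b < mdeg p a" by (rule mdeg_less[OF a b])
          then show "D b (u' * v') = (\<Sum>m\<in>{m. m \<le> b}. D m u' * D (b - m) v')"
            using less.hyps down[OF a b(1)] by blast
        qed (use e0 in blast)
        also have "\<dots> = (\<Sum>m\<in>{m. m \<le> a}. of_nat n * (D m u * D (a - m) v))"
        proof (rule sum.cong[OF refl])
          fix m assume "m \<in> {m. m \<le> a}"
          then have "n = mdeg p m + mdeg p (a - m)" by (simp add: mdeg_le_split n_def)
          then show "D m u * ser_mult \<Delta> D e (a - m) v + ser_mult \<Delta> D e m u * D (a - m) v
              = of_nat n * (D m u * D (a - m) v)"
            by (simp add: DeN N_def algebra_simps)
        qed
        also have "\<dots> = of_nat n * (\<Sum>m\<in>{m. m \<le> a}. D m u * D (a - m) v)"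
          by (simp add: sum_distrib_left)
        finally have eq: "of_nat n * D a (u * v) = of_nat n * (\<Sum>m\<in>{m. m \<le> a}. D m u * D (a - m) v)" .
        have "D a (u * v) = \<iota> w * of_nat n * D a (u * v)" by (simp add: wi)
        also have "\<dots> = \<iota> w * of_nat n * (\<Sum>m\<in>{m. m \<le> a}. D m u * D (a - m) v)"
          by (simp only: mult.assoc eq)
        also have "\<dots> = (\<Sum>m\<in>{m. m \<le> a}. D m u * D (a - m) v)" by (simp add: wi)
        finally show "D a (u * v) = (\<Sum>b\<in>{b. b \<le> a}. D b u * D (a - b) v)" .
      qed
    qed
  qed
  show ?thesis using DSE D0 main by (simp add: HS_def)
qed

end

theorem mainTheorem13:
  fixes \<iota> :: "'k::comm_ring_1 \<Rightarrow> 'a::comm_ring_1"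
    and p :: nat and \<Delta> :: "(nat \<Rightarrow> nat) set"
    and D :: "(nat \<Rightarrow> nat) \<Rightarrow> 'a \<Rightarrow> 'a"
  assumes "Q_subring TYPE('k)"
    and "ring_hom_k \<iota>"
    and "co_ideal p \<Delta>"
    and "D \<in> U_group \<iota> \<Delta>"
  shows "(D \<in> HS \<iota> \<Delta> \<longleftrightarrow>
           (\<forall>d. is_kser_derivation \<Delta> d \<longrightarrow> eps_d \<iota> \<Delta> d D \<in> ser_on \<Delta> (\<lambda>_. 0) (Der_k \<iota>)))
       \<and> ((\<forall>d. is_kser_derivation \<Delta> d \<longrightarrow> eps_d \<iota> \<Delta> d D \<in> ser_on \<Delta> (\<lambda>_. 0) (Der_k \<iota>))
           \<longleftrightarrow> eps \<iota> p \<Delta> D \<in> ser_on \<Delta> (\<lambda>_. 0) (Der_k \<iota>))"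
proof -
  interpret hsctx \<iota> p \<Delta> using assms(2,3) by unfold_locales
  have DSE: "D \<in> ser_on \<Delta> (\<lambda>_. 0) (End_k \<iota>)" using assms(4) by (simp add: U_group_def)
  have ab: "D \<in> HS \<iota> \<Delta> \<Longrightarrow> (\<forall>d. is_kser_derivation \<Delta> d \<longrightarrow> eps_d \<iota> \<Delta> d D \<in> ser_on \<Delta> (\<lambda>_. 0) (Der_k \<iota>))"
    using a_b by blast
  have bc: "(\<forall>d. is_kser_derivation \<Delta> d \<longrightarrow> eps_d \<iota> \<Delta> d D \<in> ser_on \<Delta> (\<lambda>_. 0) (Der_k \<iota>))
      \<Longrightarrow> eps \<iota> p \<Delta> D \<in> ser_on \<Delta> (\<lambda>_. 0) (Der_k \<iota>)"
  proof -
    assume h: "\<forall>d. is_kser_derivation \<Delta> d \<longrightarrow> eps_d \<iota> \<Delta> d D \<in> ser_on \<Delta> (\<lambda>_. 0) (Der_k \<iota>)"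
    have "eps_d \<iota> \<Delta> (\<lambda>f a. (of_nat (mdeg p a) :: 'k) * f a) D = eps \<iota> p \<Delta> D"
      by (simp add: eps_d_def eps_def chi_dR[OF DSE])
    then show ?thesis using h chi_der by metis
  qed
  have ca: "eps \<iota> p \<Delta> D \<in> ser_on \<Delta> (\<lambda>_. 0) (Der_k \<iota>) \<Longrightarrow> D \<in> HS \<iota> \<Delta>"
    using c_a[OF assms(1) assms(4)] by blast
  show ?thesis using ab bc ca by blast
qed

end
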